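(* Let $G$ be a planar graph and let $U$ be a set of four vertices of $G$, each of degree $5$, such that $G$ is almost $4$-connected with respect to $U$. Then there is no vertex $u\in U$ together with three neighbors $v_1,v_2,v_3$ of $u$ such that $\{u,v_1,v_2,v_3\}$ induces a complete graph $K_4$ in $G$.
   Context: All graphs are finite, simple and undirected. A $3$-cut is a set $A$ of three vertices whose removal disconnects the graph. $G$ is almost $4$-connected with respect to $U$ if $G$ has no $3$-cut $A=\{a_1,a_2,a_3\}$ such that two vertices $u,u'\in U\setminus A$ lie in different components of $G\setminus A$, or two neighbors of some $u\in U\cap A$ lie in different components of $G\setminus A$. *)

theory Defs
  imports "HOL-Analysis.Analysis"
begin

definition simple_graph :: "'a set \<Rightarrow> ('a \<Rightarrow> 'a \<Rightarrow> bool) \<Rightarrow> bool" where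
  "simple_graph V E \<longleftrightarrow> finite V \<and>
     (\<forall>x y. E x y \<longrightarrow> x \<in> V \<and> y \<in> V \<and> x \<noteq> y \<and> E y x)"

definition degree :: "'a set \<Rightarrow> ('a \<Rightarrow> 'a \<Rightarrow> bool) \<Rightarrow> 'a \<Rightarrow> nat" where
  "degree V E x = card {y \<in> V. E x y}"

definition planar :: "'a set \<Rightarrow> ('a \<Rightarrow> 'a \<Rightarrow> bool) \<Rightarrow> bool" where
  "planar V E \<longleftrightarrow> (\<exists>(f :: 'a \<Rightarrow> complex) (\<gamma> :: 'a \<Rightarrow> 'a \<Rightarrow> real \<Rightarrow> complex).
     inj_on f V \<and>
     (\<forall>x y. E x y \<longrightarrow> arc (\<gamma> x y) \<and> pathstart (\<gamma> x y) = f x \<and> pathfinish (\<gamma> x y) = f y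
        \<and> path_image (\<gamma> x y) \<inter> f ` V = {f x, f y}) \<and>
     (\<forall>x y x' y'. E x y \<longrightarrow> E x' y' \<longrightarrow> {x, y} \<noteq> {x', y'} \<longrightarrow>
        path_image (\<gamma> x y) \<inter> path_image (\<gamma> x' y') \<subseteq> f ` ({x, y} \<inter> {x', y'})))"

definition conn_in :: "('a \<Rightarrow> 'a \<Rightarrow> bool) \<Rightarrow> 'a set \<Rightarrow> 'a \<Rightarrow> 'a \<Rightarrow> bool" where
  "conn_in E S x y \<longleftrightarrow> (x, y) \<in> {(a, b). a \<in> S \<and> b \<in> S \<and> E a b}\<^sup>*"

definition diff_comp :: "'a set \<Rightarrow> ('a \<Rightarrow> 'a \<Rightarrow> bool) \<Rightarrow> 'a set \<Rightarrow> 'a \<Rightarrow> 'a \<Rightarrow> bool" where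
  "diff_comp V E A x y \<longleftrightarrow> x \<in> V - A \<and> y \<in> V - A \<and> \<not> conn_in E (V - A) x y"

definition three_cut :: "'a set \<Rightarrow> ('a \<Rightarrow> 'a \<Rightarrow> bool) \<Rightarrow> 'a set \<Rightarrow> bool" where
  "three_cut V E A \<longleftrightarrow> A \<subseteq> V \<and> card A = 3 \<and> (\<exists>x y. diff_comp V E A x y)"

definition almost_4_connected :: "'a set \<Rightarrow> ('a \<Rightarrow> 'a \<Rightarrow> bool) \<Rightarrow> 'a set \<Rightarrow> bool" where
  "almost_4_connected V E U \<longleftrightarrow> \<not> (\<exists>A. three_cut V E A \<and>
     ((\<exists>u u'. u \<in> U - A \<and> u' \<in> U - A \<and> diff_comp V E A u u') \<or>
      (\<exists>u \<in> U \<inter> A. \<exists>w w'. E u w \<and> E u w' \<and> diff_comp V E A w w')))"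

end

theory Submission
  imports Defs
begin


definition arcS :: "complex set \<Rightarrow> complex \<Rightarrow> complex \<Rightarrow> bool" where
  "arcS S p q \<longleftrightarrow> (\<exists>g. arc g \<and> pathstart g = p \<and> pathfinish g = q \<and> path_image g = S)"

lemma arcS_sym: "arcS S p q \<Longrightarrow> arcS S q p"
  unfolding arcS_def by (metis arc_reversepath path_image_reversepath pathfinish_reversepath pathstart_reversepath)

lemma arcS_join: "arcS S p q \<Longrightarrow> arcS T q r \<Longrightarrow> S \<inter> T \<subseteq> {q} \<Longrightarrow> arcS (S \<union> T) p r"
  unfolding arcS_def
proof (elim exE conjE)
  fix g h assume *: "arc g" "pathstart g = p" "pathfinish g = q" "path_image g = S"
    "arc h" "pathstart h = q" "pathfinish h = r" "path_image h = T" "S \<inter> T \<subseteq> {q}"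
  then have "arc (g +++ h)" by (simp add: arc_join_eq)
  then show "\<exists>g. arc g \<and> pathstart g = p \<and> pathfinish g = r \<and> path_image g = S \<union> T"
    using * by (intro exI[of _ "g +++ h"]) (auto simp: path_image_join)
qed

lemma arcS_basic:
  assumes "arcS S p q"
  shows "p \<in> S" "q \<in> S" "p \<noteq> q" "compact S" "closed S" "bounded S" "connected S"
    "connected (S - {p,q})" "S - {p,q} \<noteq> {}" "connected (S - {p})" "connected (S - {q})"
    "closure (S - {p,q}) = S"
proof -
  obtain g where g: "arc g" "pathstart g = p" "pathfinish g = q" "path_image g = S"
    using assms arcS_def by blast
  show "p \<in> S" "q \<in> S" using g pathstart_in_path_image pathfinish_in_path_image by metis+
  show "p \<noteq> q" using g arc_distinct_ends by metis
  show "compact S" using g compact_arc_image by metis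
  then show "closed S" "bounded S" by (auto intro: compact_imp_closed compact_imp_bounded)
  show "connected S" using g connected_path_image arc_imp_path by metis
  show "connected (S - {p,q})" using g connected_simple_path_endless arc_imp_simple_path by metis
  show "S - {p,q} \<noteq> {}" using g nonempty_simple_path_endless arc_imp_simple_path by metis
  have inj: "inj_on g {0..1}" using g(1) arc_def by blast
  have cont: "continuous_on {0..1} g" using g(1) arc_def path_def by blast
  have e1: "S - {p} = g ` {0<..1}"
  proof -
    have "g ` {0<..1} = g ` ({0..1} - {0})" by (rule arg_cong[where f="image g"]) auto
    also have "\<dots> = g ` {0..1} - g ` {0}" using inj by (intro inj_on_image_set_diff) auto
    finally show ?thesis using g by (simp add: path_image_def pathstart_def)
  qed
  show "connected (S - {p})" unfolding e1
    by (rule connected_continuous_image) (auto intro: continuous_on_subset[OF cont])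
  have e2: "S - {q} = g ` {0..<1}"
  proof -
    have "g ` {0..<1} = g ` ({0..1} - {1})" by (rule arg_cong[where f="image g"]) auto
    also have "\<dots> = g ` {0..1} - g ` {1}" using inj by (intro inj_on_image_set_diff) auto
    finally show ?thesis using g by (simp add: path_image_def pathfinish_def)
  qed
  show "connected (S - {q})" unfolding e2
    by (rule connected_continuous_image) (auto intro: continuous_on_subset[OF cont])
  have e3: "S - {p,q} = g ` {0<..<1}"
  proof -
    have "g ` {0<..<1} = g ` ({0..1} - {0,1})" by (rule arg_cong[where f="image g"]) auto
    also have "\<dots> = g ` {0..1} - g ` {0,1}" using inj by (intro inj_on_image_set_diff) auto
    finally show ?thesis using g by (simp add: path_image_def pathfinish_def pathstart_def)
  qed
  have "g ` closure {0<..<1::real} \<subseteq> closure (g ` {0<..<1})"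
    using closure_subset[of "g ` {0<..<1}"]
    by (intro image_closure_subset) (auto intro: continuous_on_subset[OF cont])
  then have "S \<subseteq> closure (S - {p,q})" using g(4) by (simp add: e3 path_image_def)
  moreover have "closure (S - {p,q}) \<subseteq> S"
    using \<open>closed S\<close> by (simp add: closure_minimal)
  ultimately show "closure (S - {p,q}) = S" by blast
qed


lemma conn2:
  assumes "connected X" "open A" "open B" "X \<subseteq> A \<union> B" "A \<inter> B = {}"
  shows "X \<subseteq> A \<or> X \<subseteq> B"
  using connectedD[OF assms(1,2,3)] assms(4,5) by blast

lemma CC:
  fixes J :: "complex set"
  assumes "closed J" "connected X" "X \<inter> J = {}"
  shows "X \<subseteq> inside J \<or> X \<subseteq> outside J"
  using conn2[OF assms(2) open_inside[OF assms(1)] open_outside[OF assms(1)]] assms(3)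
    inside_Un_outside[of J] inside_Int_outside[of J] by blast

lemma side:
  fixes J :: "complex set"
  assumes "closed J" "connected X" "X \<inter> J = {}" "x \<in> X" "y \<in> X"
  shows "x \<in> inside J \<longleftrightarrow> y \<in> inside J"
  using CC[OF assms(1,2,3)] assms(4,5) inside_Int_outside[of J] by blast

lemma JC:
  assumes "arcS S p q" "arcS T p q" "S \<inter> T = {p,q}"
  shows "open (inside (S \<union> T))" "connected (inside (S \<union> T))" "inside (S \<union> T) \<noteq> {}"
    "open (outside (S \<union> T))" "connected (outside (S \<union> T))"
    "bounded (inside (S \<union> T))" "frontier (inside (S \<union> T)) = S \<union> T"
    "closed (S \<union> T)" "bounded (S \<union> T)"
    "closure (inside (S \<union> T)) = inside (S \<union> T) \<union> (S \<union> T)"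
    "- closure (inside (S \<union> T)) = outside (S \<union> T)"
proof -
  obtain g where g: "arc g" "pathstart g = p" "pathfinish g = q" "path_image g = S"
    using assms arcS_def by blast
  obtain h where h: "arc h" "pathstart h = p" "pathfinish h = q" "path_image h = T"
    using assms arcS_def by blast
  have sp: "simple_path (g +++ reversepath h)"
    using g h assms(3) by (subst simple_path_join_loop_eq) (auto simp: arc_reversepath)
  have lp: "pathfinish (g +++ reversepath h) = pathstart (g +++ reversepath h)" using g h by simp
  have im: "path_image (g +++ reversepath h) = S \<union> T" using g h by (simp add: path_image_join)
  note J = Jordan_inside_outside[OF sp lp, unfolded im]
  show "open (inside (S \<union> T))" "connected (inside (S \<union> T))" "inside (S \<union> T) \<noteq> {}"
    "open (outside (S \<union> T))" "connected (outside (S \<union> T))"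
    "bounded (inside (S \<union> T))" "frontier (inside (S \<union> T)) = S \<union> T" using J by auto
  show cl: "closed (S \<union> T)" "bounded (S \<union> T)" using arcS_basic assms by auto
  show "closure (inside (S \<union> T)) = inside (S \<union> T) \<union> (S \<union> T)"
    using J closure_Un_frontier by metis
  then show "- closure (inside (S \<union> T)) = outside (S \<union> T)"
    by (simp add: outside_inside Un_commute)
qed

lemma TS:
  assumes "arcS S1 p q" "arcS S2 p q" "arcS S p q"
    "S1 \<inter> S2 = {p,q}" "S1 \<inter> S = {p,q}" "S2 \<inter> S = {p,q}"
    "(S - {p,q}) \<inter> inside (S1 \<union> S2) \<noteq> {}"
  shows "inside (S1 \<union> S) \<inter> inside (S2 \<union> S) = {}"
    "inside (S1 \<union> S) \<union> inside (S2 \<union> S) \<union> (S - {p,q}) = inside (S1 \<union> S2)"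
proof -
  obtain g1 where g1: "arc g1" "pathstart g1 = p" "pathfinish g1 = q" "path_image g1 = S1"
    using assms arcS_def by blast
  obtain g2 where g2: "arc g2" "pathstart g2 = p" "pathfinish g2 = q" "path_image g2 = S2"
    using assms arcS_def by blast
  obtain g where g: "arc g" "pathstart g = p" "pathfinish g = q" "path_image g = S"
    using assms arcS_def by blast
  have "p \<noteq> q" using g arc_distinct_ends by metis
  have ne: "path_image g \<inter> inside (path_image g1 \<union> path_image g2) \<noteq> {}"
    using assms(7) g g1 g2 by blast
  show "inside (S1 \<union> S) \<inter> inside (S2 \<union> S) = {}"
    "inside (S1 \<union> S) \<union> inside (S2 \<union> S) \<union> (S - {p,q}) = inside (S1 \<union> S2)"
    using split_inside_simple_closed_curve[OF arc_imp_simple_path[OF g1(1)] g1(2,3)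
      arc_imp_simple_path[OF g2(1)] g2(2,3) arc_imp_simple_path[OF g(1)] g(2,3) \<open>p \<noteq> q\<close> _ _ _ ne]
    using assms g g1 g2 by auto
qed

lemma OI_claim:
  assumes "arcS S1 p q" "arcS S2 p q" "arcS S3 p q"
    "S1 \<inter> S2 = {p,q}" "S1 \<inter> S3 = {p,q}" "S2 \<inter> S3 = {p,q}"
    "S2 - {p,q} \<subseteq> outside (S1 \<union> S3)" "S3 - {p,q} \<subseteq> outside (S1 \<union> S2)"
  shows "inside (S1 \<union> S2) \<subseteq> outside (S1 \<union> S3)"
proof -
  note J12 = JC[OF assms(1,2,4)] and J13 = JC[OF assms(1,3,5)]
  have "inside (S1 \<union> S2) \<inter> (S1 \<union> S3) = {}"
  proof -
    have "inside (S1 \<union> S2) \<inter> (S1 \<union> S2) = {}" by simp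
    moreover have "inside (S1 \<union> S2) \<inter> outside (S1 \<union> S2) = {}" by simp
    moreover have "S3 \<subseteq> (S3 - {p,q}) \<union> (S1 \<union> S2)" using assms(4) by blast
    ultimately show ?thesis using assms(8) by blast
  qed
  then have "inside (S1 \<union> S2) \<subseteq> inside (S1 \<union> S3) \<or> inside (S1 \<union> S2) \<subseteq> outside (S1 \<union> S3)"
    using CC J12(2) J13(8) by blast
  moreover have "\<not> inside (S1 \<union> S2) \<subseteq> inside (S1 \<union> S3)"
  proof
    assume a: "inside (S1 \<union> S2) \<subseteq> inside (S1 \<union> S3)"
    obtain x where x: "x \<in> S2 - {p,q}" using arcS_basic(9)[OF assms(2)] by blast
    have "x \<in> closure (inside (S1 \<union> S2))" using x J12(10) by blast
    also have "\<dots> \<subseteq> closure (inside (S1 \<union> S3))" using a closure_mono by blast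
    finally have "x \<in> inside (S1 \<union> S3) \<union> (S1 \<union> S3)" using J13(10) by blast
    moreover have "x \<notin> S1 \<union> S3" using x assms(4,6) by blast
    ultimately have "x \<in> inside (S1 \<union> S3)" by blast
    moreover have "x \<in> outside (S1 \<union> S3)" using x assms(7) by blast
    ultimately show False using inside_Int_outside by blast
  qed
  ultimately show ?thesis by blast
qed

lemma OI:
  assumes "arcS S1 p q" "arcS S2 p q" "arcS S3 p q"
    "S1 \<inter> S2 = {p,q}" "S1 \<inter> S3 = {p,q}" "S2 \<inter> S3 = {p,q}"
  shows "S3 - {p,q} \<subseteq> inside (S1 \<union> S2) \<or> S1 - {p,q} \<subseteq> inside (S2 \<union> S3)
     \<or> S2 - {p,q} \<subseteq> inside (S1 \<union> S3)"
proof (rule ccontr)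
  assume na: "\<not> ?thesis"
  note J12 = JC[OF assms(1,2,4)] and J13 = JC[OF assms(1,3,5)] and J23 = JC[OF assms(2,3,6)]
  have "S3 - {p,q} \<subseteq> inside (S1 \<union> S2) \<or> S3 - {p,q} \<subseteq> outside (S1 \<union> S2)"
    using CC[OF J12(8) arcS_basic(8)[OF assms(3)]] assms(5,6) by blast
  then have o3: "S3 - {p,q} \<subseteq> outside (S1 \<union> S2)" using na by blast
  have "S1 - {p,q} \<subseteq> inside (S2 \<union> S3) \<or> S1 - {p,q} \<subseteq> outside (S2 \<union> S3)"
    using CC[OF J23(8) arcS_basic(8)[OF assms(1)]] assms(4,5) by blast
  then have o1: "S1 - {p,q} \<subseteq> outside (S2 \<union> S3)" using na by blast
  have "S2 - {p,q} \<subseteq> inside (S1 \<union> S3) \<or> S2 - {p,q} \<subseteq> outside (S1 \<union> S3)"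
    using CC[OF J13(8) arcS_basic(8)[OF assms(2)]] assms(4,6) by blast
  then have o2: "S2 - {p,q} \<subseteq> outside (S1 \<union> S3)" using na by blast
  have i12_13: "inside (S1 \<union> S2) \<subseteq> outside (S1 \<union> S3)"
    by (rule OI_claim[OF assms o2 o3])
  have u21: "S2 \<union> S1 = S1 \<union> S2" and u31: "S3 \<union> S1 = S1 \<union> S3" and u32: "S3 \<union> S2 = S2 \<union> S3"
    by blast+
  have n21: "S2 \<inter> S1 = {p,q}" and n31: "S3 \<inter> S1 = {p,q}" and n32: "S3 \<inter> S2 = {p,q}"
    using assms(4,5,6) by blast+
  have i12_23: "inside (S1 \<union> S2) \<subseteq> outside (S2 \<union> S3)"
    using OI_claim[OF assms(2,1,3) n21 assms(6) assms(5) o1] o3 unfolding u21 by blast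
  have i13_23: "inside (S1 \<union> S3) \<subseteq> outside (S2 \<union> S3)"
    using OI_claim[OF assms(3,1,2) n31 n32 assms(4)] o1 o2 unfolding u31 u32 by blast
  have i23_13: "inside (S2 \<union> S3) \<subseteq> outside (S1 \<union> S3)"
    using OI_claim[OF assms(3,2,1) n32 n31 n21] o1 o2 unfolding u31 u32 by blast
  define A where "A = closure (inside (S1 \<union> S3))"
  define B where "B = closure (inside (S2 \<union> S3))"
  have AB: "A \<inter> B = S3"
  proof -
    have "A \<inter> B = (inside (S1 \<union> S3) \<union> (S1 \<union> S3)) \<inter> (inside (S2 \<union> S3) \<union> (S2 \<union> S3))"
      unfolding A_def B_def J13(10) J23(10) ..
    also have "\<dots> = S3"
    proof -
      have "inside (S1 \<union> S3) \<inter> (inside (S2 \<union> S3) \<union> (S2 \<union> S3)) = {}"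
        using i13_23 inside_Int_outside[of "S2 \<union> S3"] outside_no_overlap[of "S2 \<union> S3"] by blast
      moreover have "inside (S2 \<union> S3) \<inter> (S1 \<union> S3) = {}"
        using i23_13 outside_no_overlap[of "S1 \<union> S3"] by blast
      ultimately have "(inside (S1 \<union> S3) \<union> (S1 \<union> S3)) \<inter> (inside (S2 \<union> S3) \<union> (S2 \<union> S3))
          = (S1 \<union> S3) \<inter> (S2 \<union> S3)" by blast
      also have "\<dots> = (S1 \<inter> S2) \<union> S3" by blast
      also have "\<dots> = S3" using assms(4) arcS_basic(1,2)[OF assms(3)] by auto
      finally show ?thesis .
    qed
    finally show ?thesis .
  qed
  have "connected (- (A \<union> B))"
  proof (rule Janiszewski_connected)
    show "compact A" unfolding A_def using J13(6) by (simp add: compact_closure)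
    show "closed B" unfolding B_def by simp
    show "connected (A \<inter> B)" using AB arcS_basic(7)[OF assms(3)] by simp
    show "connected (- A)" using J13(11) J13(5) A_def by simp
    show "connected (- B)" using J23(11) J23(5) B_def by simp
  qed
  moreover have eq: "- (A \<union> B) = outside (S1 \<union> S3) \<inter> outside (S2 \<union> S3)"
    by (simp only: Compl_Un A_def B_def J13(11) J23(11))
  ultimately have co: "connected (outside (S1 \<union> S3) \<inter> outside (S2 \<union> S3))" by simp
  have "(outside (S1 \<union> S3) \<inter> outside (S2 \<union> S3)) \<inter> (S1 \<union> S2) = {}"
    using outside_no_overlap[of "S1 \<union> S3"] outside_no_overlap[of "S2 \<union> S3"] by blast
  then have "outside (S1 \<union> S3) \<inter> outside (S2 \<union> S3) \<subseteq> inside (S1 \<union> S2)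
      \<or> outside (S1 \<union> S3) \<inter> outside (S2 \<union> S3) \<subseteq> outside (S1 \<union> S2)"
    using CC[OF J12(8) co] by blast
  moreover have "inside (S1 \<union> S2) \<subseteq> outside (S1 \<union> S3) \<inter> outside (S2 \<union> S3)"
    using i12_13 i12_23 by blast
  ultimately have sub: "outside (S1 \<union> S3) \<inter> outside (S2 \<union> S3) \<subseteq> inside (S1 \<union> S2)"
    using J12(3) inside_Int_outside[of "S1 \<union> S2"] by blast
  have "bounded (A \<union> B)" unfolding A_def B_def using J13(6) J23(6) by auto
  moreover have "bounded (- (A \<union> B))" using sub eq J12(6) bounded_subset by metis
  ultimately have "bounded ((A \<union> B) \<union> - (A \<union> B))" using bounded_Un by blast
  moreover have "(A \<union> B) \<union> - (A \<union> B) = UNIV" by blast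
  ultimately show False using not_bounded_UNIV by metis
qed




definition K4 :: "(complex \<Rightarrow> complex \<Rightarrow> complex set) \<Rightarrow> complex set \<Rightarrow> bool" where
  "K4 S P \<longleftrightarrow> (\<forall>p\<in>P. \<forall>q\<in>P. p \<noteq> q \<longrightarrow> arcS (S p q) p q \<and> S p q = S q p \<and> S p q \<inter> P = {p,q}) \<and>
    (\<forall>p\<in>P. \<forall>q\<in>P. \<forall>r\<in>P. \<forall>s\<in>P. p \<noteq> q \<longrightarrow> r \<noteq> s \<longrightarrow> {p,q} \<noteq> {r,s} \<longrightarrow>
       S p q \<inter> S r s \<subseteq> {p,q} \<inter> {r,s})"

definition tri :: "(complex \<Rightarrow> complex \<Rightarrow> complex set) \<Rightarrow> complex \<Rightarrow> complex \<Rightarrow> complex \<Rightarrow> complex set" where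
  "tri S x y z = S x y \<union> S y z \<union> S x z"

lemma notin_helper: "A \<inter> P = {p,q} \<Longrightarrow> v \<in> P \<Longrightarrow> v \<noteq> p \<Longrightarrow> v \<noteq> q \<Longrightarrow> v \<notin> A"
  by blast

lemma K4_facts:
  assumes "K4 S {x,y,z,w}" "distinct [x,y,z,w]"
  shows "arcS (S x y) x y" "arcS (S x z) x z" "arcS (S x w) x w" "arcS (S y z) y z" "arcS (S y w) y w" "arcS (S z w) z w" "S y x = S x y" "S z x = S x z" "S w x = S x w" "S z y = S y z" "S w y = S y w" "S w z = S z w" "z \<notin> S x y" "w \<notin> S x y" "y \<notin> S x z" "w \<notin> S x z" "y \<notin> S x w" "z \<notin> S x w" "x \<notin> S y z" "w \<notin> S y z" "x \<notin> S y w" "z \<notin> S y w" "x \<notin> S z w" "y \<notin> S z w" "S x y \<inter> S x z \<subseteq> {x}" "S x y \<inter> S x w \<subseteq> {x}" "S x y \<inter> S y z \<subseteq> {y}" "S x y \<inter> S y w \<subseteq> {y}" "S x z \<inter> S x w \<subseteq> {x}" "S x z \<inter> S y z \<subseteq> {z}" "S x z \<inter> S z w \<subseteq> {z}" "S x w \<inter> S y w \<subseteq> {w}" "S x w \<inter> S z w \<subseteq> {w}" "S y z \<inter> S y w \<subseteq> {y}" "S y z \<inter> S z w \<subseteq> {z}" "S y w \<inter> S z w \<subseteq> {w}" "S x y \<inter> S z w = {}" "S x z \<inter> S y w = {}" "S x w \<inter> S y z = {}"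
proof -
  have A0: "\<forall>p\<in>{x,y,z,w}. \<forall>q\<in>{x,y,z,w}. p \<noteq> q \<longrightarrow> arcS (S p q) p q \<and> S p q = S q p \<and> S p q \<inter> {x,y,z,w} = {p,q}"
    using assms(1) unfolding K4_def by (rule conjunct1)
  have B0: "\<forall>p\<in>{x,y,z,w}. \<forall>q\<in>{x,y,z,w}. \<forall>r\<in>{x,y,z,w}. \<forall>s\<in>{x,y,z,w}. p \<noteq> q \<longrightarrow> r \<noteq> s \<longrightarrow> {p,q} \<noteq> {r,s} \<longrightarrow>
       S p q \<inter> S r s \<subseteq> {p,q} \<inter> {r,s}"
    using assms(1) unfolding K4_def by (rule conjunct2)
  note A = A0[rule_format] and B = B0[rule_format]
  have dd: "x \<noteq> y" "x \<noteq> z" "x \<noteq> w" "y \<noteq> z" "y \<noteq> w" "z \<noteq> w" using assms(2) by auto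
  have Axy: "arcS (S x y) x y \<and> S x y = S y x \<and> S x y \<inter> {x,y,z,w} = {x,y}" by (rule A) (use dd in auto)
  note Axy_1 = conjunct1[OF Axy] and Axy_2 = conjunct1[OF conjunct2[OF Axy]] and Axy_3 = conjunct2[OF conjunct2[OF Axy]]
  have Axz: "arcS (S x z) x z \<and> S x z = S z x \<and> S x z \<inter> {x,y,z,w} = {x,z}" by (rule A) (use dd in auto)
  note Axz_1 = conjunct1[OF Axz] and Axz_2 = conjunct1[OF conjunct2[OF Axz]] and Axz_3 = conjunct2[OF conjunct2[OF Axz]]
  have Axw: "arcS (S x w) x w \<and> S x w = S w x \<and> S x w \<inter> {x,y,z,w} = {x,w}" by (rule A) (use dd in auto)
  note Axw_1 = conjunct1[OF Axw] and Axw_2 = conjunct1[OF conjunct2[OF Axw]] and Axw_3 = conjunct2[OF conjunct2[OF Axw]]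
  have Ayz: "arcS (S y z) y z \<and> S y z = S z y \<and> S y z \<inter> {x,y,z,w} = {y,z}" by (rule A) (use dd in auto)
  note Ayz_1 = conjunct1[OF Ayz] and Ayz_2 = conjunct1[OF conjunct2[OF Ayz]] and Ayz_3 = conjunct2[OF conjunct2[OF Ayz]]
  have Ayw: "arcS (S y w) y w \<and> S y w = S w y \<and> S y w \<inter> {x,y,z,w} = {y,w}" by (rule A) (use dd in auto)
  note Ayw_1 = conjunct1[OF Ayw] and Ayw_2 = conjunct1[OF conjunct2[OF Ayw]] and Ayw_3 = conjunct2[OF conjunct2[OF Ayw]]
  have Azw: "arcS (S z w) z w \<and> S z w = S w z \<and> S z w \<inter> {x,y,z,w} = {z,w}" by (rule A) (use dd in auto)
  note Azw_1 = conjunct1[OF Azw] and Azw_2 = conjunct1[OF conjunct2[OF Azw]] and Azw_3 = conjunct2[OF conjunct2[OF Azw]]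
  show "arcS (S x y) x y" by (rule Axy_1)
  show "S y x = S x y" by (rule Axy_2[symmetric])
  show "z \<notin> S x y" by (rule notin_helper[OF Axy_3]) (use dd in simp_all)
  show "w \<notin> S x y" by (rule notin_helper[OF Axy_3]) (use dd in simp_all)
  show "arcS (S x z) x z" by (rule Axz_1)
  show "S z x = S x z" by (rule Axz_2[symmetric])
  show "y \<notin> S x z" by (rule notin_helper[OF Axz_3]) (use dd in simp_all)
  show "w \<notin> S x z" by (rule notin_helper[OF Axz_3]) (use dd in simp_all)
  show "arcS (S x w) x w" by (rule Axw_1)
  show "S w x = S x w" by (rule Axw_2[symmetric])
  show "y \<notin> S x w" by (rule notin_helper[OF Axw_3]) (use dd in simp_all)
  show "z \<notin> S x w" by (rule notin_helper[OF Axw_3]) (use dd in simp_all)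
  show "arcS (S y z) y z" by (rule Ayz_1)
  show "S z y = S y z" by (rule Ayz_2[symmetric])
  show "x \<notin> S y z" by (rule notin_helper[OF Ayz_3]) (use dd in simp_all)
  show "w \<notin> S y z" by (rule notin_helper[OF Ayz_3]) (use dd in simp_all)
  show "arcS (S y w) y w" by (rule Ayw_1)
  show "S w y = S y w" by (rule Ayw_2[symmetric])
  show "x \<notin> S y w" by (rule notin_helper[OF Ayw_3]) (use dd in simp_all)
  show "z \<notin> S y w" by (rule notin_helper[OF Ayw_3]) (use dd in simp_all)
  show "arcS (S z w) z w" by (rule Azw_1)
  show "S w z = S z w" by (rule Azw_2[symmetric])
  show "x \<notin> S z w" by (rule notin_helper[OF Azw_3]) (use dd in simp_all)
  show "y \<notin> S z w" by (rule notin_helper[OF Azw_3]) (use dd in simp_all)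
  show "S x y \<inter> S x z \<subseteq> {x}"
  proof -
    have "S x y \<inter> S x z \<subseteq> {x,y} \<inter> {x,z}" by (rule B) (use dd in \<open>auto simp: doubleton_eq_iff\<close>)
    then show ?thesis using dd by blast
  qed
  show "S x y \<inter> S x w \<subseteq> {x}"
  proof -
    have "S x y \<inter> S x w \<subseteq> {x,y} \<inter> {x,w}" by (rule B) (use dd in \<open>auto simp: doubleton_eq_iff\<close>)
    then show ?thesis using dd by blast
  qed
  show "S x y \<inter> S y z \<subseteq> {y}"
  proof -
    have "S x y \<inter> S y z \<subseteq> {x,y} \<inter> {y,z}" by (rule B) (use dd in \<open>auto simp: doubleton_eq_iff\<close>)
    then show ?thesis using dd by blast
  qed
  show "S x y \<inter> S y w \<subseteq> {y}"
  proof -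
    have "S x y \<inter> S y w \<subseteq> {x,y} \<inter> {y,w}" by (rule B) (use dd in \<open>auto simp: doubleton_eq_iff\<close>)
    then show ?thesis using dd by blast
  qed
  show "S x y \<inter> S z w = {}"
  proof -
    have "S x y \<inter> S z w \<subseteq> {x,y} \<inter> {z,w}" by (rule B) (use dd in \<open>auto simp: doubleton_eq_iff\<close>)
    then show ?thesis using dd by blast
  qed
  show "S x z \<inter> S x w \<subseteq> {x}"
  proof -
    have "S x z \<inter> S x w \<subseteq> {x,z} \<inter> {x,w}" by (rule B) (use dd in \<open>auto simp: doubleton_eq_iff\<close>)
    then show ?thesis using dd by blast
  qed
  show "S x z \<inter> S y z \<subseteq> {z}"
  proof -
    have "S x z \<inter> S y z \<subseteq> {x,z} \<inter> {y,z}" by (rule B) (use dd in \<open>auto simp: doubleton_eq_iff\<close>)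
    then show ?thesis using dd by blast
  qed
  show "S x z \<inter> S y w = {}"
  proof -
    have "S x z \<inter> S y w \<subseteq> {x,z} \<inter> {y,w}" by (rule B) (use dd in \<open>auto simp: doubleton_eq_iff\<close>)
    then show ?thesis using dd by blast
  qed
  show "S x z \<inter> S z w \<subseteq> {z}"
  proof -
    have "S x z \<inter> S z w \<subseteq> {x,z} \<inter> {z,w}" by (rule B) (use dd in \<open>auto simp: doubleton_eq_iff\<close>)
    then show ?thesis using dd by blast
  qed
  show "S x w \<inter> S y z = {}"
  proof -
    have "S x w \<inter> S y z \<subseteq> {x,w} \<inter> {y,z}" by (rule B) (use dd in \<open>auto simp: doubleton_eq_iff\<close>)
    then show ?thesis using dd by blast
  qed
  show "S x w \<inter> S y w \<subseteq> {w}"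
  proof -
    have "S x w \<inter> S y w \<subseteq> {x,w} \<inter> {y,w}" by (rule B) (use dd in \<open>auto simp: doubleton_eq_iff\<close>)
    then show ?thesis using dd by blast
  qed
  show "S x w \<inter> S z w \<subseteq> {w}"
  proof -
    have "S x w \<inter> S z w \<subseteq> {x,w} \<inter> {z,w}" by (rule B) (use dd in \<open>auto simp: doubleton_eq_iff\<close>)
    then show ?thesis using dd by blast
  qed
  show "S y z \<inter> S y w \<subseteq> {y}"
  proof -
    have "S y z \<inter> S y w \<subseteq> {y,z} \<inter> {y,w}" by (rule B) (use dd in \<open>auto simp: doubleton_eq_iff\<close>)
    then show ?thesis using dd by blast
  qed
  show "S y z \<inter> S z w \<subseteq> {z}"
  proof -
    have "S y z \<inter> S z w \<subseteq> {y,z} \<inter> {z,w}" by (rule B) (use dd in \<open>auto simp: doubleton_eq_iff\<close>)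
    then show ?thesis using dd by blast
  qed
  show "S y w \<inter> S z w \<subseteq> {w}"
  proof -
    have "S y w \<inter> S z w \<subseteq> {y,w} \<inter> {z,w}" by (rule B) (use dd in \<open>auto simp: doubleton_eq_iff\<close>)
    then show ?thesis using dd by blast
  qed
qed


lemma side_sub:
  fixes J :: "complex set"
  assumes "closed J" "connected X" "X \<inter> J = {}" "x \<in> X" "x \<in> inside J"
  shows "X \<subseteq> inside J"
  using side[OF assms(1,2,3) assms(4)] assms(5) by blast

lemma side_pt:
  fixes J :: "complex set"
  assumes "closed J" "connected X" "X \<inter> J = {}" "x \<in> X" "x \<in> inside J" "y \<in> X"
  shows "y \<in> inside J"
  using side[OF assms(1,2,3) assms(4,6)] assms(5) by blast

lemma K4_mem:
  assumes "K4 S {x,y,z,w}" "distinct [x,y,z,w]"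
  shows "x \<in> S x y" "y \<in> S x y" "x \<in> S x z" "z \<in> S x z" "x \<in> S x w" "w \<in> S x w"
    "y \<in> S y z" "z \<in> S y z" "y \<in> S y w" "w \<in> S y w" "z \<in> S z w" "w \<in> S z w"
  using arcS_basic(1,2)[OF K4_facts(1)[OF assms]] arcS_basic(1,2)[OF K4_facts(2)[OF assms]]
    arcS_basic(1,2)[OF K4_facts(3)[OF assms]] arcS_basic(1,2)[OF K4_facts(4)[OF assms]]
    arcS_basic(1,2)[OF K4_facts(5)[OF assms]] arcS_basic(1,2)[OF K4_facts(6)[OF assms]]
  by auto

lemma FD:
  assumes K: "K4 S {x,y,z,w}" and D: "distinct [x,y,z,w]" and W: "w \<in> inside (tri S x y z)"
  shows "inside (tri S x y w) \<subseteq> inside (tri S x y z)" "inside (tri S x z w) \<subseteq> inside (tri S x y z)"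
    "inside (tri S y z w) \<subseteq> inside (tri S x y z)"
    "inside (tri S x y z) \<subseteq> inside (tri S x y w) \<union> inside (tri S x z w) \<union> inside (tri S y z w) \<union> S x w \<union> S y w \<union> S z w"
proof -
  note F = K4_facts[OF K D] and M = K4_mem[OF K D]
  have dd: "x \<noteq> y" "x \<noteq> z" "x \<noteq> w" "y \<noteq> z" "y \<noteq> w" "z \<noteq> w" using D by auto
  define S2 where "S2 = S x z \<union> S y z"
  define R where "R = S x w \<union> S y w"
  have arc2: "arcS S2 x y" unfolding S2_def by (rule arcS_join[OF F(2) arcS_sym[OF F(4)] F(30)])
  have arcR: "arcS R x y" unfolding R_def by (rule arcS_join[OF F(3) arcS_sym[OF F(5)] F(32)])
  have i12: "S x y \<inter> S2 = {x,y}" unfolding S2_def using F(25) F(27) M by blast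
  have i1R: "S x y \<inter> R = {x,y}" unfolding R_def using F(26) F(28) M by blast
  have i2R: "S2 \<inter> R = {x,y}" unfolding S2_def R_def using F(29) F(38) F(39) F(34) M by blast
  have eqT: "S x y \<union> S2 = tri S x y z" unfolding S2_def tri_def by blast
  have eq1: "S x y \<union> R = tri S x y w" unfolding R_def tri_def by blast
  have ne: "(R - {x,y}) \<inter> inside (S x y \<union> S2) \<noteq> {}"
    using W M(6) dd unfolding eqT R_def by blast
  note t = TS[OF F(1) arc2 arcR i12 i1R i2R ne]
  have T2: "inside (tri S x y z) = inside (S x y \<union> R) \<union> inside (S2 \<union> R) \<union> (R - {x,y})"
    using t(2) eqT by simp
  note J1 = JC[OF F(1) arcR i1R] and JQ = JC[OF arc2 arcR i2R] and JT = JC[OF F(1) arc2 i12]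
  have c1: "S z w - {z,w} \<subseteq> inside (tri S x y z)"
  proof -
    have "S z w - {z} \<subseteq> inside (tri S x y z)"
    proof (rule side_sub)
      show "closed (tri S x y z)" using JT(8) eqT by simp
      show "connected (S z w - {z})" by (rule arcS_basic(10)[OF F(6)])
      show "(S z w - {z}) \<inter> tri S x y z = {}" unfolding tri_def using F(37) F(35) F(31) by blast
      show "w \<in> S z w - {z}" using M dd by blast
    qed (rule W)
    then show ?thesis by blast
  qed
  have c2: "S z w - {z,w} \<subseteq> inside (S x y \<union> R) \<union> inside (S2 \<union> R)"
  proof -
    have "(S z w - {z,w}) \<inter> R = {}" unfolding R_def using F(33) F(36) by blast
    then show ?thesis using c1 unfolding T2 by blast
  qed
  have c3: "S z w - {z,w} \<subseteq> inside (S x y \<union> R) \<or> S z w - {z,w} \<subseteq> inside (S2 \<union> R)"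
    by (rule conn2[OF arcS_basic(8)[OF F(6)] J1(1) JQ(1) c2 t(1)])
  have c4: "\<not> S z w - {z,w} \<subseteq> inside (S x y \<union> R)"
  proof
    assume a: "S z w - {z,w} \<subseteq> inside (S x y \<union> R)"
    obtain v where v: "v \<in> S z w - {z,w}" using arcS_basic(9)[OF F(6)] by blast
    have "z \<in> inside (S x y \<union> R)"
    proof (rule side_pt)
      show "closed (S x y \<union> R)" by (rule J1(8))
      show "connected (S z w - {w})" by (rule arcS_basic(11)[OF F(6)])
      show "(S z w - {w}) \<inter> (S x y \<union> R) = {}" unfolding R_def using F(37) F(33) F(36) by blast
      show "v \<in> S z w - {w}" using v by blast
      show "v \<in> inside (S x y \<union> R)" using v a by blast
      show "z \<in> S z w - {w}" using M dd by blast
    qed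
    then have "z \<in> inside (tri S x y z)" unfolding T2 by blast
    moreover have "z \<in> tri S x y z" unfolding tri_def using M by blast
    ultimately show False using inside_no_overlap by blast
  qed
  with c3 have c5: "S z w - {z,w} \<subseteq> inside (S2 \<union> R)" by blast
  define Y1 where "Y1 = S x z \<union> S x w"
  define Y2 where "Y2 = S y z \<union> S y w"
  have aY1: "arcS Y1 z w" unfolding Y1_def by (rule arcS_join[OF arcS_sym[OF F(2)] F(3) F(29)])
  have aY2: "arcS Y2 z w" unfolding Y2_def by (rule arcS_join[OF arcS_sym[OF F(4)] F(5) F(34)])
  have iY12: "Y1 \<inter> Y2 = {z,w}" unfolding Y1_def Y2_def using F(30) F(38) F(39) F(32) M by blast
  have iY1C: "Y1 \<inter> S z w = {z,w}" unfolding Y1_def using F(31) F(33) M by blast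
  have iY2C: "Y2 \<inter> S z w = {z,w}" unfolding Y2_def using F(35) F(36) M by blast
  have eqQ: "Y1 \<union> Y2 = S2 \<union> R" unfolding Y1_def Y2_def S2_def R_def by blast
  have ne2: "(S z w - {z,w}) \<inter> inside (Y1 \<union> Y2) \<noteq> {}"
    using c5 arcS_basic(9)[OF F(6)] unfolding eqQ by blast
  have e1: "Y1 \<union> S z w = tri S x z w" unfolding Y1_def tri_def by blast
  have e2: "Y2 \<union> S z w = tri S y z w" unfolding Y2_def tri_def by blast
  note t2 = TS[OF aY1 aY2 F(6) iY12 iY1C iY2C ne2]
  have Q2: "inside (S2 \<union> R) = inside (tri S x z w) \<union> inside (tri S y z w) \<union> (S z w - {z,w})"
    using t2(2) eqQ e1 e2 by simp
  show "inside (tri S x y w) \<subseteq> inside (tri S x y z)" unfolding T2 eq1[symmetric] by blast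
  show "inside (tri S x z w) \<subseteq> inside (tri S x y z)" unfolding T2 Q2 by blast
  show "inside (tri S y z w) \<subseteq> inside (tri S x y z)" unfolding T2 Q2 by blast
  show "inside (tri S x y z) \<subseteq> inside (tri S x y w) \<union> inside (tri S x z w) \<union> inside (tri S y z w) \<union> S x w \<union> S y w \<union> S z w"
    unfolding T2 Q2 eq1[symmetric] by (auto simp: R_def)
qed




lemma SI:
  assumes K: "K4 S {x,y,z,w}" and D: "distinct [x,y,z,w]"
  shows "x \<in> inside (tri S y z w) \<or> y \<in> inside (tri S x z w) \<or> z \<in> inside (tri S x y w)
     \<or> w \<in> inside (tri S x y z)"
proof -
  note F = K4_facts[OF K D] and M = K4_mem[OF K D]
  have dd: "x \<noteq> y" "x \<noteq> z" "x \<noteq> w" "y \<noteq> z" "y \<noteq> w" "z \<noteq> w" using D by auto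
  define R2 where "R2 = S x z \<union> S y z"
  define R3 where "R3 = S x w \<union> S y w"
  have a2: "arcS R2 x y" unfolding R2_def by (rule arcS_join[OF F(2) arcS_sym[OF F(4)] F(30)])
  have a3: "arcS R3 x y" unfolding R3_def by (rule arcS_join[OF F(3) arcS_sym[OF F(5)] F(32)])
  have i12: "S x y \<inter> R2 = {x,y}" unfolding R2_def using F(25) F(27) M by blast
  have i13: "S x y \<inter> R3 = {x,y}" unfolding R3_def using F(26) F(28) M by blast
  have i23: "R2 \<inter> R3 = {x,y}" unfolding R2_def R3_def using F(29) F(38) F(39) F(34) M by blast
  have e12: "S x y \<union> R2 = tri S x y z" unfolding R2_def tri_def by blast
  have e13: "S x y \<union> R3 = tri S x y w" unfolding R3_def tri_def by blast
  have wR3: "w \<in> R3 - {x,y}" unfolding R3_def using M dd by blast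
  have zR2: "z \<in> R2 - {x,y}" unfolding R2_def using M dd by blast
  have "R3 - {x,y} \<subseteq> inside (S x y \<union> R2) \<or> S x y - {x,y} \<subseteq> inside (R2 \<union> R3)
     \<or> R2 - {x,y} \<subseteq> inside (S x y \<union> R3)"
    by (rule OI[OF F(1) a2 a3 i12 i13 i23])
  moreover
  { assume "R3 - {x,y} \<subseteq> inside (S x y \<union> R2)"
    then have ?thesis using wR3 unfolding e12 by blast }
  moreover
  { assume "R2 - {x,y} \<subseteq> inside (S x y \<union> R3)"
    then have ?thesis using zR2 unfolding e13 by blast }
  moreover
  { assume ii: "S x y - {x,y} \<subseteq> inside (R2 \<union> R3)"
    note JQ = JC[OF a2 a3 i23]
    have dQ: "(S z w - {z,w}) \<inter> (R2 \<union> R3) = {}" unfolding R2_def R3_def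
      using F(31) F(35) F(33) F(36) by blast
    have "S z w - {z,w} \<subseteq> inside (R2 \<union> R3) \<or> S z w - {z,w} \<subseteq> outside (R2 \<union> R3)"
      by (rule CC[OF JQ(8) arcS_basic(8)[OF F(6)] dQ])
    moreover
    { assume cin: "S z w - {z,w} \<subseteq> inside (R2 \<union> R3)"
      have i21: "R2 \<inter> S x y = {x,y}" using i12 by blast
      have i31: "R3 \<inter> S x y = {x,y}" using i13 by blast
      have ne: "(S x y - {x,y}) \<inter> inside (R2 \<union> R3) \<noteq> {}"
        using ii arcS_basic(9)[OF F(1)] by blast
      note t = TS[OF a2 a3 F(1) i23 i21 i31 ne]
      have e21: "R2 \<union> S x y = tri S x y z" using e12 by blast
      have e31: "R3 \<union> S x y = tri S x y w" using e13 by blast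
      have IQ: "inside (R2 \<union> R3) = inside (tri S x y z) \<union> inside (tri S x y w) \<union> (S x y - {x,y})"
        using t(2) e21 e31 by simp
      have dis: "inside (tri S x y z) \<inter> inside (tri S x y w) = {}" using t(1) e21 e31 by simp
      note J1 = JC[OF F(1) a2 i12] and J2 = JC[OF F(1) a3 i13]
      have "S z w - {z,w} \<subseteq> inside (tri S x y z) \<union> inside (tri S x y w)"
        using cin F(37) unfolding IQ by blast
      then have "S z w - {z,w} \<subseteq> inside (tri S x y z) \<or> S z w - {z,w} \<subseteq> inside (tri S x y w)"
        using conn2[OF arcS_basic(8)[OF F(6)] _ _ _ dis] J1(1) J2(1) e12 e13 by simp
      moreover
      { assume a: "S z w - {z,w} \<subseteq> inside (tri S x y z)"
        obtain v where v: "v \<in> S z w - {z,w}" using arcS_basic(9)[OF F(6)] by blast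
        have "w \<in> inside (tri S x y z)"
        proof (rule side_pt)
          show "closed (tri S x y z)" using J1(8) e12 by simp
          show "connected (S z w - {z})" by (rule arcS_basic(10)[OF F(6)])
          show "(S z w - {z}) \<inter> tri S x y z = {}" unfolding tri_def using F(37) F(35) F(31) by blast
          show "v \<in> S z w - {z}" using v by blast
          show "v \<in> inside (tri S x y z)" using v a by blast
          show "w \<in> S z w - {z}" using M dd by blast
        qed
        then have ?thesis by blast }
      moreover
      { assume a: "S z w - {z,w} \<subseteq> inside (tri S x y w)"
        obtain v where v: "v \<in> S z w - {z,w}" using arcS_basic(9)[OF F(6)] by blast
        have "z \<in> inside (tri S x y w)"
        proof (rule side_pt)
          show "closed (tri S x y w)" using J2(8) e13 by simp
          show "connected (S z w - {w})" by (rule arcS_basic(11)[OF F(6)])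
          show "(S z w - {w}) \<inter> tri S x y w = {}" unfolding tri_def using F(37) F(36) F(33) by blast
          show "v \<in> S z w - {w}" using v by blast
          show "v \<in> inside (tri S x y w)" using v a by blast
          show "z \<in> S z w - {w}" using M dd by blast
        qed
        then have ?thesis by blast }
      ultimately have ?thesis by blast }
    moreover
    { assume cout: "S z w - {z,w} \<subseteq> outside (R2 \<union> R3)"
      define Z2 where "Z2 = S x z \<union> S x w"
      define Z3 where "Z3 = S y z \<union> S y w"
      have aZ2: "arcS Z2 z w" unfolding Z2_def by (rule arcS_join[OF arcS_sym[OF F(2)] F(3) F(29)])
      have aZ3: "arcS Z3 z w" unfolding Z3_def by (rule arcS_join[OF arcS_sym[OF F(4)] F(5) F(34)])
      have j12: "S z w \<inter> Z2 = {z,w}" unfolding Z2_def using F(31) F(33) M by blast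
      have j13: "S z w \<inter> Z3 = {z,w}" unfolding Z3_def using F(35) F(36) M by blast
      have j23: "Z2 \<inter> Z3 = {z,w}" unfolding Z2_def Z3_def using F(30) F(38) F(39) F(32) M by blast
      have eQ: "Z2 \<union> Z3 = R2 \<union> R3" unfolding Z2_def Z3_def R2_def R3_def by blast
      have f12: "S z w \<union> Z2 = tri S x z w" unfolding Z2_def tri_def by blast
      have f13: "S z w \<union> Z3 = tri S y z w" unfolding Z3_def tri_def by blast
      have "Z3 - {z,w} \<subseteq> inside (S z w \<union> Z2) \<or> S z w - {z,w} \<subseteq> inside (Z2 \<union> Z3)
         \<or> Z2 - {z,w} \<subseteq> inside (S z w \<union> Z3)"
        by (rule OI[OF F(6) aZ2 aZ3 j12 j13 j23])
      moreover have "\<not> S z w - {z,w} \<subseteq> inside (Z2 \<union> Z3)"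
        using cout arcS_basic(9)[OF F(6)] inside_Int_outside[of "R2 \<union> R3"] unfolding eQ by blast
      moreover have "y \<in> Z3 - {z,w}" unfolding Z3_def using M dd by blast
      moreover have "x \<in> Z2 - {z,w}" unfolding Z2_def using M dd by blast
      ultimately have ?thesis unfolding f12 f13 by blast }
    ultimately have ?thesis by blast }
  ultimately show ?thesis by blast
qed

lemma MT0:
  assumes K: "K4 S {x,y,z,w}" and D: "distinct [x,y,z,w]" and W: "w \<in> inside (tri S x y z)"
    and h1: "c \<in> inside (tri S x y z) \<longleftrightarrow> w \<in> inside (tri S x y z)"
    and h2: "c \<in> inside (tri S x y w) \<longleftrightarrow> z \<in> inside (tri S x y w)"
    and h3: "c \<in> inside (tri S x z w) \<longleftrightarrow> y \<in> inside (tri S x z w)"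
    and h4: "c \<in> inside (tri S y z w) \<longleftrightarrow> x \<in> inside (tri S y z w)"
    and hc: "c \<notin> S x w" "c \<notin> S y w" "c \<notin> S z w"
  shows False
proof -
  note M = K4_mem[OF K D] and G = FD[OF K D W]
  have T: "x \<in> tri S x y z" "y \<in> tri S x y z" "z \<in> tri S x y z" unfolding tri_def using M by blast+
  have c: "c \<in> inside (tri S x y z)" using h1 W by blast
  then have "c \<in> inside (tri S x y w) \<or> c \<in> inside (tri S x z w) \<or> c \<in> inside (tri S y z w)"
    using G(4) hc by blast
  moreover
  { assume "c \<in> inside (tri S x y w)"
    then have "z \<in> inside (tri S x y z)" using h2 G(1) by blast
    then have False using T inside_no_overlap by blast }
  moreover
  { assume "c \<in> inside (tri S x z w)"
    then have "y \<in> inside (tri S x y z)" using h3 G(2) by blast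
    then have False using T inside_no_overlap by blast }
  moreover
  { assume "c \<in> inside (tri S y z w)"
    then have "x \<in> inside (tri S x y z)" using h4 G(3) by blast
    then have False using T inside_no_overlap by blast }
  ultimately show False by blast
qed

lemma MT:
  assumes K: "K4 S {x,y,z,w}" and D: "distinct [x,y,z,w]"
    and h1: "c \<in> inside (tri S x y z) \<longleftrightarrow> w \<in> inside (tri S x y z)"
    and h2: "c \<in> inside (tri S x y w) \<longleftrightarrow> z \<in> inside (tri S x y w)"
    and h3: "c \<in> inside (tri S x z w) \<longleftrightarrow> y \<in> inside (tri S x z w)"
    and h4: "c \<in> inside (tri S y z w) \<longleftrightarrow> x \<in> inside (tri S y z w)"
    and hc: "c \<notin> S x y" "c \<notin> S x z" "c \<notin> S x w" "c \<notin> S y z" "c \<notin> S y w" "c \<notin> S z w"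
  shows False
proof -
  note F = K4_facts[OF K D]
  have s: "S y x = S x y" "S z x = S x z" "S w x = S x w" "S z y = S y z" "S w y = S y w" "S w z = S z w"
    using F(7-12) by auto
  have P1: "{x,y,w,z} = {x,y,z,w}" "{x,z,w,y} = {x,y,z,w}" "{y,z,w,x} = {x,y,z,w}" by blast+
  have tp: "tri S x w z = tri S x z w" "tri S y w z = tri S y z w" "tri S x z y = tri S x y z"
    "tri S x w y = tri S x y w" "tri S z w y = tri S y z w" "tri S y z x = tri S x y z"
    "tri S y w x = tri S x y w" "tri S z w x = tri S x z w"
    unfolding tri_def s by blast+
  have "x \<in> inside (tri S y z w) \<or> y \<in> inside (tri S x z w) \<or> z \<in> inside (tri S x y w)
     \<or> w \<in> inside (tri S x y z)" by (rule SI[OF K D])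
  moreover
  { assume W: "w \<in> inside (tri S x y z)"
    have False by (rule MT0[OF K D W h1 h2 h3 h4 hc(3,5,6)]) }
  moreover
  { assume W: "z \<in> inside (tri S x y w)"
    have K': "K4 S {x,y,w,z}" using K P1(1) by simp
    have D': "distinct [x,y,w,z]" using D by auto
    have False
      by (rule MT0[OF K' D' W]) (use h1 h2 h3 h4 hc in \<open>simp_all only: tp s not_False_eq_True simp_thms\<close>) }
  moreover
  { assume W: "y \<in> inside (tri S x z w)"
    have K': "K4 S {x,z,w,y}" using K P1(2) by simp
    have D': "distinct [x,z,w,y]" using D by auto
    have False
      by (rule MT0[OF K' D' W]) (use h1 h2 h3 h4 hc in \<open>simp_all only: tp s not_False_eq_True simp_thms\<close>) }
  moreover
  { assume W: "x \<in> inside (tri S y z w)"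
    have K': "K4 S {y,z,w,x}" using K P1(3) by simp
    have D': "distinct [y,z,w,x]" using D by auto
    have False
      by (rule MT0[OF K' D' W]) (use h1 h2 h3 h4 hc in \<open>simp_all only: tp s not_False_eq_True simp_thms\<close>) }
  ultimately show False by blast
qed




definition mkS :: "('a \<Rightarrow> complex) \<Rightarrow> 'a set \<Rightarrow> ('a \<Rightarrow> 'a \<Rightarrow> real \<Rightarrow> complex) \<Rightarrow> complex \<Rightarrow> complex \<Rightarrow> complex set" where
  "mkS f V \<gamma> p q = (let t = (SOME t. t \<in> {(p,q),(q,p)}) in path_image (\<gamma> (inv_into V f (fst t)) (inv_into V f (snd t))))"

lemma mkS_sym: "mkS f V \<gamma> p q = mkS f V \<gamma> q p"
  unfolding mkS_def by (simp add: insert_commute)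

lemma mkS_repr:
  assumes "inj_on f V" "Q \<subseteq> V" "p \<in> f ` Q" "q \<in> f ` Q"
  shows "\<exists>x y. x \<in> Q \<and> y \<in> Q \<and> ((f x = p \<and> f y = q) \<or> (f x = q \<and> f y = p)) \<and> mkS f V \<gamma> p q = path_image (\<gamma> x y)"
proof -
  define t where "t = (SOME t. t \<in> {(p,q),(q,p)})"
  have t: "t \<in> {(p,q),(q,p)}" unfolding t_def by (rule someI[of _ "(p,q)"]) simp
  obtain x0 where x0: "x0 \<in> Q" "p = f x0" using assms(3) by blast
  obtain y0 where y0: "y0 \<in> Q" "q = f y0" using assms(4) by blast
  have ix: "inv_into V f p = x0" using x0 assms(1,2) by (metis inv_into_f_f subsetD)
  have iy: "inv_into V f q = y0" using y0 assms(1,2) by (metis inv_into_f_f subsetD)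
  have e: "mkS f V \<gamma> p q = path_image (\<gamma> (inv_into V f (fst t)) (inv_into V f (snd t)))"
    unfolding mkS_def t_def Let_def ..
  show ?thesis
  proof (cases "t = (p,q)")
    case True
    then show ?thesis using e ix iy x0 y0 by (intro exI[of _ x0] exI[of _ y0]) simp
  next
    case False
    then have "t = (q,p)" using t by blast
    then show ?thesis using e ix iy x0 y0 by (intro exI[of _ y0] exI[of _ x0]) simp
  qed
qed

locale pl =
  fixes V :: "'a set" and E :: "'a \<Rightarrow> 'a \<Rightarrow> bool" and f :: "'a \<Rightarrow> complex"
    and \<gamma> :: "'a \<Rightarrow> 'a \<Rightarrow> real \<Rightarrow> complex"
  assumes inj: "inj_on f V"
    and G1: "\<And>x y. E x y \<Longrightarrow> arc (\<gamma> x y) \<and> pathstart (\<gamma> x y) = f x \<and> pathfinish (\<gamma> x y) = f y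
        \<and> path_image (\<gamma> x y) \<inter> f ` V = {f x, f y}"
    and G2: "\<And>x y x' y'. E x y \<Longrightarrow> E x' y' \<Longrightarrow> {x, y} \<noteq> {x', y'} \<Longrightarrow>
        path_image (\<gamma> x y) \<inter> path_image (\<gamma> x' y') \<subseteq> f ` ({x, y} \<inter> {x', y'})"
    and EV: "\<And>x y. E x y \<Longrightarrow> x \<in> V \<and> y \<in> V \<and> x \<noteq> y \<and> E y x"
begin

abbreviation "SS \<equiv> mkS f V \<gamma>"

lemma SS_repr:
  assumes "Q \<subseteq> V" "\<forall>x\<in>Q. \<forall>y\<in>Q. x \<noteq> y \<longrightarrow> E x y" "p \<in> f ` Q" "q \<in> f ` Q" "p \<noteq> q"
  obtains x y where "x \<in> Q" "y \<in> Q" "x \<noteq> y" "E x y" "(f x = p \<and> f y = q) \<or> (f x = q \<and> f y = p)"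
    "SS p q = path_image (\<gamma> x y)"
proof -
  obtain x y where xy: "x \<in> Q" "y \<in> Q" "(f x = p \<and> f y = q) \<or> (f x = q \<and> f y = p)"
    "SS p q = path_image (\<gamma> x y)"
    using mkS_repr[OF inj assms(1,3,4)] by blast
  have "x \<noteq> y" using xy(3) assms(5) by auto
  then show ?thesis using that xy assms(2) by blast
qed

lemma K4_planar:
  assumes Q: "Q \<subseteq> V" and QE: "\<forall>x\<in>Q. \<forall>y\<in>Q. x \<noteq> y \<longrightarrow> E x y"
  shows "K4 SS (f ` Q)"
  unfolding K4_def
proof (intro conjI ballI impI)
  fix p q assume pq: "p \<in> f ` Q" "q \<in> f ` Q" "p \<noteq> q"
  obtain x y where xy: "x \<in> Q" "y \<in> Q" "x \<noteq> y" "E x y" "(f x = p \<and> f y = q) \<or> (f x = q \<and> f y = p)"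
    "SS p q = path_image (\<gamma> x y)" by (rule SS_repr[OF Q QE pq])
  note g = G1[OF xy(4)]
  have a: "arcS (SS p q) (f x) (f y)" unfolding arcS_def using g xy(6) by blast
  show "arcS (SS p q) p q" using a xy(5) arcS_sym by blast
  show "SS p q = SS q p" by (rule mkS_sym)
  have "f ` Q \<subseteq> f ` V" using Q by blast
  then show "SS p q \<inter> f ` Q = {p, q}" using g xy(6) xy(5) pq by blast
next
  fix p q r s assume pq: "p \<in> f ` Q" "q \<in> f ` Q" "r \<in> f ` Q" "s \<in> f ` Q" "p \<noteq> q" "r \<noteq> s"
    "{p, q} \<noteq> {r, s}"
  obtain x y where xy: "x \<in> Q" "y \<in> Q" "x \<noteq> y" "E x y" "(f x = p \<and> f y = q) \<or> (f x = q \<and> f y = p)"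
    "SS p q = path_image (\<gamma> x y)" by (rule SS_repr[OF Q QE pq(1,2,5)])
  obtain x' y' where xy': "x' \<in> Q" "y' \<in> Q" "x' \<noteq> y'" "E x' y'" "(f x' = r \<and> f y' = s) \<or> (f x' = s \<and> f y' = r)"
    "SS r s = path_image (\<gamma> x' y')" by (rule SS_repr[OF Q QE pq(3,4,6)])
  have fx: "f ` {x,y} = {p,q}" "f ` {x',y'} = {r,s}" using xy(5) xy'(5) by auto
  have "{x,y} \<noteq> {x',y'}" using fx pq(7) by metis
  then have "SS p q \<inter> SS r s \<subseteq> f ` ({x,y} \<inter> {x',y'})" using G2[OF xy(4) xy'(4)] xy(6) xy'(6) by simp
  also have "\<dots> \<subseteq> f ` {x,y} \<inter> f ` {x',y'}" by blast
  finally show "SS p q \<inter> SS r s \<subseteq> {p, q} \<inter> {r, s}" using fx by simp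
qed

lemma SS_avoid:
  assumes Q: "Q \<subseteq> V" and QE: "\<forall>x\<in>Q. \<forall>y\<in>Q. x \<noteq> y \<longrightarrow> E x y"
    and pq: "p \<in> f ` Q" "q \<in> f ` Q" "p \<noteq> q" and v: "v \<in> V" "f v \<noteq> p" "f v \<noteq> q"
  shows "f v \<notin> SS p q"
proof -
  obtain x y where xy: "x \<in> Q" "y \<in> Q" "x \<noteq> y" "E x y" "(f x = p \<and> f y = q) \<or> (f x = q \<and> f y = p)"
    "SS p q = path_image (\<gamma> x y)" by (rule SS_repr[OF Q QE pq])
  show ?thesis using G1[OF xy(4)] xy(5,6) v by blast
qed

lemma SS_edge:
  assumes Q: "Q \<subseteq> V" and QE: "\<forall>x\<in>Q. \<forall>y\<in>Q. x \<noteq> y \<longrightarrow> E x y"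
    and pq: "p \<in> f ` Q" "q \<in> f ` Q" "p \<noteq> q" and e: "E e1 e2" "f e1 \<notin> {p,q}" "f e2 \<notin> {p,q}"
  shows "path_image (\<gamma> e1 e2) \<inter> SS p q = {}"
proof -
  obtain x y where xy: "x \<in> Q" "y \<in> Q" "x \<noteq> y" "E x y" "(f x = p \<and> f y = q) \<or> (f x = q \<and> f y = p)"
    "SS p q = path_image (\<gamma> x y)" by (rule SS_repr[OF Q QE pq])
  have ne: "{e1,e2} \<noteq> {x,y}" using e(2) xy(5) by auto
  have "e1 \<noteq> x" "e1 \<noteq> y" "e2 \<noteq> x" "e2 \<noteq> y" using e(2,3) xy(5) by auto
  then have "{e1,e2} \<inter> {x,y} = {}" by auto
  then show ?thesis using G2[OF e(1) xy(4) ne] xy(6) by simp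
qed

lemma path_cc:
  assumes "conn_in E W s t" "W \<subseteq> V" "s \<in> W" "\<forall>v\<in>W. f v \<notin> K"
    "\<forall>e1 e2. e1 \<in> W \<longrightarrow> e2 \<in> W \<longrightarrow> E e1 e2 \<longrightarrow> path_image (\<gamma> e1 e2) \<inter> K = {}"
  shows "connected_component (- K) (f s) (f t)"
proof -
  have "(s, t) \<in> {(a, b). a \<in> W \<and> b \<in> W \<and> E a b}\<^sup>*" using assms(1) unfolding conn_in_def by simp
  then show ?thesis
  proof (induction rule: rtrancl_induct)
    case base
    then show ?case using assms(3,4) by (simp add: connected_component_refl_eq)
  next
    case (step y z)
    then have yz: "y \<in> W" "z \<in> W" "E y z" by auto
    note g = G1[OF yz(3)]
    have "connected_component (- K) (f y) (f z)"
      unfolding connected_component_def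
    proof (intro exI conjI)
      show "connected (path_image (\<gamma> y z))" using g connected_path_image arc_imp_path by blast
      show "path_image (\<gamma> y z) \<subseteq> - K" using assms(5) yz by blast
      show "f y \<in> path_image (\<gamma> y z)" using g pathstart_in_path_image by metis
      show "f z \<in> path_image (\<gamma> y z)" using g pathfinish_in_path_image by metis
    qed
    then show ?case using step.IH connected_component_trans by metis
  qed
qed

lemma tri_cc:
  assumes Q: "Q \<subseteq> V" and QE: "\<forall>x\<in>Q. \<forall>y\<in>Q. x \<noteq> y \<longrightarrow> E x y"
    and x: "x1 \<in> Q" "x2 \<in> Q" "x3 \<in> Q" "distinct [x1,x2,x3]"
    and c: "conn_in E (V - {x1,x2,x3}) s t" "s \<in> V - {x1,x2,x3}" "t \<in> V - {x1,x2,x3}"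
  shows "f s \<in> inside (tri SS (f x1) (f x2) (f x3)) \<longleftrightarrow> f t \<in> inside (tri SS (f x1) (f x2) (f x3))"
proof -
  let ?W = "V - {x1,x2,x3}"
  have xV: "x1 \<in> V" "x2 \<in> V" "x3 \<in> V" using x Q by auto
  have fne: "f x1 \<noteq> f x2" "f x1 \<noteq> f x3" "f x2 \<noteq> f x3" using x xV inj by (auto dest: inj_onD)
  have fi: "f x1 \<in> f ` Q" "f x2 \<in> f ` Q" "f x3 \<in> f ` Q" using x by auto
  have fW: "\<And>v. v \<in> ?W \<Longrightarrow> f v \<noteq> f x1 \<and> f v \<noteq> f x2 \<and> f v \<noteq> f x3"
    using xV inj by (auto dest: inj_onD)
  have av: "\<forall>v\<in>?W. f v \<notin> tri SS (f x1) (f x2) (f x3)"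
  proof
    fix v assume v: "v \<in> ?W"
    then have "v \<in> V" by blast
    then show "f v \<notin> tri SS (f x1) (f x2) (f x3)" unfolding tri_def
      using SS_avoid[OF Q QE fi(1,2) fne(1)] SS_avoid[OF Q QE fi(2,3) fne(3)] SS_avoid[OF Q QE fi(1,3) fne(2)]
        fW[OF v] by blast
  qed
  have ed: "\<forall>e1 e2. e1 \<in> ?W \<longrightarrow> e2 \<in> ?W \<longrightarrow> E e1 e2 \<longrightarrow> path_image (\<gamma> e1 e2) \<inter> tri SS (f x1) (f x2) (f x3) = {}"
  proof (intro allI impI)
    fix e1 e2 assume e: "e1 \<in> ?W" "e2 \<in> ?W" "E e1 e2"
    have n: "f e1 \<notin> {f x1, f x2}" "f e2 \<notin> {f x1, f x2}" "f e1 \<notin> {f x2, f x3}" "f e2 \<notin> {f x2, f x3}"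
      "f e1 \<notin> {f x1, f x3}" "f e2 \<notin> {f x1, f x3}" using fW[OF e(1)] fW[OF e(2)] by auto
    show "path_image (\<gamma> e1 e2) \<inter> tri SS (f x1) (f x2) (f x3) = {}" unfolding tri_def
      using SS_edge[OF Q QE fi(1,2) fne(1) e(3) n(1,2)] SS_edge[OF Q QE fi(2,3) fne(3) e(3) n(3,4)]
        SS_edge[OF Q QE fi(1,3) fne(2) e(3) n(5,6)] by blast
  qed
  have "connected_component (- tri SS (f x1) (f x2) (f x3)) (f s) (f t)"
    by (rule path_cc[OF c(1) _ c(2) av ed]) blast
  then show ?thesis using inside_same_component connected_component_sym by metis
qed

end


theorem claim1:
  fixes V U :: "'a set" and E :: "'a \<Rightarrow> 'a \<Rightarrow> bool"
  assumes "simple_graph V E"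
    and "planar V E"
    and "U \<subseteq> V" and "card U = 4"
    and "\<forall>u \<in> U. degree V E u = 5"
    and "almost_4_connected V E U"
  shows "\<not> (\<exists>u \<in> U. \<exists>v1 v2 v3. E u v1 \<and> E u v2 \<and> E u v3 \<and> distinct [v1, v2, v3]
              \<and> E v1 v2 \<and> E v1 v3 \<and> E v2 v3)"
proof
  assume "\<exists>u \<in> U. \<exists>v1 v2 v3. E u v1 \<and> E u v2 \<and> E u v3 \<and> distinct [v1, v2, v3]
              \<and> E v1 v2 \<and> E v1 v3 \<and> E v2 v3"
  then obtain u v1 v2 v3 where uU: "u \<in> U" and e: "E u v1" "E u v2" "E u v3" "distinct [v1, v2, v3]"
    "E v1 v2" "E v1 v3" "E v2 v3" by blast
  obtain f :: "'a \<Rightarrow> complex" and \<gamma> :: "'a \<Rightarrow> 'a \<Rightarrow> real \<Rightarrow> complex" where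
    fg: "inj_on f V \<and>
     (\<forall>x y. E x y \<longrightarrow> arc (\<gamma> x y) \<and> pathstart (\<gamma> x y) = f x \<and> pathfinish (\<gamma> x y) = f y
        \<and> path_image (\<gamma> x y) \<inter> f ` V = {f x, f y}) \<and>
     (\<forall>x y x' y'. E x y \<longrightarrow> E x' y' \<longrightarrow> {x, y} \<noteq> {x', y'} \<longrightarrow>
        path_image (\<gamma> x y) \<inter> path_image (\<gamma> x' y') \<subseteq> f ` ({x, y} \<inter> {x', y'}))"
    using assms(2) unfolding planar_def by (elim exE) (rule that)
  note inj = conjunct1[OF fg] and g1 = conjunct1[OF conjunct2[OF fg]] and g2 = conjunct2[OF conjunct2[OF fg]]
  have fin: "finite V" using assms(1) unfolding simple_graph_def by (rule conjunct1)
  have EV0: "\<forall>x y. E x y \<longrightarrow> x \<in> V \<and> y \<in> V \<and> x \<noteq> y \<and> E y x"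
    using assms(1) unfolding simple_graph_def by (rule conjunct2)
  note EV = EV0[rule_format]
  interpret pl V E f \<gamma>
    by unfold_locales (fact inj | erule g1[rule_format] | erule EV | (rule g2[rule_format]; assumption))+
  have uV: "u \<in> V" using uU assms(3) by blast
  have vV: "v1 \<in> V" "v2 \<in> V" "v3 \<in> V" using EV e by blast+
  have du: "u \<noteq> v1" "u \<noteq> v2" "u \<noteq> v3" using EV e by blast+
  have dv: "v1 \<noteq> v2" "v1 \<noteq> v3" "v2 \<noteq> v3" using e(4) by auto
  define N where "N = {y \<in> V. E u y}"
  have cN: "card N = 5" using assms(5) uU unfolding N_def degree_def by blast
  have fN: "finite N" unfolding N_def using fin by simp
  have sub: "{v1,v2,v3} \<subseteq> N" unfolding N_def using e vV by blast
  have c3: "card {v1,v2,v3} = 3" using dv by simp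
  have "card (N - {v1,v2,v3}) = 2" using card_Diff_subset[OF _ sub] cN c3 by simp
  then obtain w where w: "w \<in> N - {v1,v2,v3}" by (metis card.empty ex_in_conv zero_neq_numeral)
  then have wV: "w \<in> V" and uw: "E u w" and wv: "w \<noteq> v1" "w \<noteq> v2" "w \<noteq> v3" unfolding N_def by auto
  have wu: "w \<noteq> u" using EV uw by blast
  have key: "conn_in E (V - A) w t"
    if A: "A \<subseteq> V" "card A = 3" "u \<in> A" "t \<in> V - A" "E u t" "w \<notin> A" for A t
  proof (rule ccontr)
    assume nc: "\<not> conn_in E (V - A) w t"
    have dc: "diff_comp V E A w t" unfolding diff_comp_def using nc A wV by blast
    have "three_cut V E A" unfolding three_cut_def using A dc by blast
    moreover have "u \<in> U \<inter> A" using uU A by blast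
    ultimately show False using assms(6) dc uw A(5) unfolding almost_4_connected_def by blast
  qed
  define Q where "Q = {u,v1,v2,v3}"
  have QV: "Q \<subseteq> V" unfolding Q_def using uV vV by blast
  have QE: "\<forall>x\<in>Q. \<forall>y\<in>Q. x \<noteq> y \<longrightarrow> E x y" unfolding Q_def using e EV by blast
  have uQ: "u \<in> Q" "v1 \<in> Q" "v2 \<in> Q" "v3 \<in> Q" unfolding Q_def by blast+
  have K: "K4 SS {f u, f v1, f v2, f v3}" using K4_planar[OF QV QE] unfolding Q_def by simp
  have fd: "f u \<noteq> f v1" "f u \<noteq> f v2" "f u \<noteq> f v3" "f v1 \<noteq> f v2" "f v1 \<noteq> f v3" "f v2 \<noteq> f v3"
    "f w \<noteq> f u" "f w \<noteq> f v1" "f w \<noteq> f v2" "f w \<noteq> f v3"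
    using du dv wu wv uV vV wV inj by (auto dest: inj_onD)
  have D: "distinct [f u, f v1, f v2, f v3]" using fd by simp
  have k1: "conn_in E (V - {u,v1,v2}) w v3"
    by (rule key) (use uV vV du dv wv wu e in auto)
  have k2: "conn_in E (V - {u,v1,v3}) w v2"
    by (rule key) (use uV vV du dv wv wu e in auto)
  have k3: "conn_in E (V - {u,v2,v3}) w v1"
    by (rule key) (use uV vV du dv wv wu e in auto)
  have k4: "conn_in E (V - {v1,v2,v3}) u w"
    unfolding conn_in_def using uV wV du wv uw by (intro r_into_rtrancl) auto
  have h1: "f w \<in> inside (tri SS (f u) (f v1) (f v2)) \<longleftrightarrow> f v3 \<in> inside (tri SS (f u) (f v1) (f v2))"
    by (rule tri_cc[OF QV QE uQ(1,2,3) _ k1]) (use du dv wu wv wV vV in simp_all)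
  have h2: "f w \<in> inside (tri SS (f u) (f v1) (f v3)) \<longleftrightarrow> f v2 \<in> inside (tri SS (f u) (f v1) (f v3))"
    by (rule tri_cc[OF QV QE uQ(1,2,4) _ k2]) (use du dv wu wv wV vV in simp_all)
  have h3: "f w \<in> inside (tri SS (f u) (f v2) (f v3)) \<longleftrightarrow> f v1 \<in> inside (tri SS (f u) (f v2) (f v3))"
    by (rule tri_cc[OF QV QE uQ(1,3,4) _ k3]) (use du dv wu wv wV vV in simp_all)
  have h4': "f u \<in> inside (tri SS (f v1) (f v2) (f v3)) \<longleftrightarrow> f w \<in> inside (tri SS (f v1) (f v2) (f v3))"
    by (rule tri_cc[OF QV QE uQ(2,3,4) _ k4]) (use du dv wu wv wV uV in simp_all)
  have fQ: "f u \<in> f ` Q" "f v1 \<in> f ` Q" "f v2 \<in> f ` Q" "f v3 \<in> f ` Q" using uQ by blast+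
  have hc1: "f w \<notin> SS (f u) (f v1)"
    by (rule SS_avoid[OF QV QE fQ(1,2) fd(1) wV]) (use fd in simp_all)
  have hc2: "f w \<notin> SS (f u) (f v2)"
    by (rule SS_avoid[OF QV QE fQ(1,3) fd(2) wV]) (use fd in simp_all)
  have hc3: "f w \<notin> SS (f u) (f v3)"
    by (rule SS_avoid[OF QV QE fQ(1,4) fd(3) wV]) (use fd in simp_all)
  have hc4: "f w \<notin> SS (f v1) (f v2)"
    by (rule SS_avoid[OF QV QE fQ(2,3) fd(4) wV]) (use fd in simp_all)
  have hc5: "f w \<notin> SS (f v1) (f v3)"
    by (rule SS_avoid[OF QV QE fQ(2,4) fd(5) wV]) (use fd in simp_all)
  have hc6: "f w \<notin> SS (f v2) (f v3)"
    by (rule SS_avoid[OF QV QE fQ(3,4) fd(6) wV]) (use fd in simp_all)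
  note hc = hc1 hc2 hc3 hc4 hc5 hc6
  show False
    by (rule MT[OF K D h1 h2 h3 _ hc]) (use h4' in blast)
qed


end
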